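(* Let $\Gamma=(V,E)$ be a connected graph of valency at least $3$, $G\leqslant\mathrm{Aut}(\Gamma)$, and assume $\Gamma$ is $(G,2)$-arc-transitive. Let $G^*=\langle G_{\alpha_1},G_{\alpha_2}\rangle$ for some $\{\alpha_1,\alpha_2\}\in E$ and $M=\mathrm{soc}(G^* )$, and assume $G^*$ is a quasiprimitive group of PA type on each of its orbits on $V$, so that $M=T_1\times\cdots\times T_n$ is the unique minimal normal subgroup of $G^*$, with $n\geqslant2$ and the $T_i$ pairwise isomorphic nonabelian simple groups, and for each $\alpha\in V$ there are subgroups $R_i<T_i$ with $M_\alpha\leqslant R_1\times\cdots\times R_n$ such that every projection $\pi_i:M_\alpha\to R_i$ is surjective. For $1\leqslant i\leqslant n$ let $N_i=\prod_{j\ne i}T_j$. Then every $N_i$ is intransitive on each of the $M$-orbits on $V$.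
   Context: Graphs are finite, simple and undirected; $G_\alpha$ is a vertex stabilizer. A $2$-arc is a triple $(\alpha,\beta,\gamma)$ of distinct vertices with $\{\alpha,\beta\},\{\beta,\gamma\}\in E$, and $(G,2)$-arc-transitive means $G$ is transitive on $2$-arcs. A permutation group is quasiprimitive if each minimal normal subgroup is transitive. $\mathrm{soc}(X)$ is the subgroup generated by all minimal normal subgroups of $X$. *)

theory Defs
  imports "HOL-Algebra.Algebra"
begin

definition graph_aut :: "'v set \<Rightarrow> ('v \<Rightarrow> 'v \<Rightarrow> bool) \<Rightarrow> ('v \<Rightarrow> 'v) set" where
  "graph_aut V E = {g \<in> Bij V. \<forall>x\<in>V. \<forall>y\<in>V. E x y \<longleftrightarrow> E (g x) (g y)}"

definition finite_simple_graph :: "'v set \<Rightarrow> ('v \<Rightarrow> 'v \<Rightarrow> bool) \<Rightarrow> bool" where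
  "finite_simple_graph V E \<longleftrightarrow> finite V \<and> (\<forall>x y. E x y \<longrightarrow> x \<in> V \<and> y \<in> V)
     \<and> (\<forall>x y. E x y \<longrightarrow> E y x) \<and> (\<forall>x. \<not> E x x)"

definition connected_graph :: "'v set \<Rightarrow> ('v \<Rightarrow> 'v \<Rightarrow> bool) \<Rightarrow> bool" where
  "connected_graph V E \<longleftrightarrow> V \<noteq> {} \<and> (\<forall>x\<in>V. \<forall>y\<in>V. E\<^sup>*\<^sup>* x y)"

definition min_valency_ge :: "'v set \<Rightarrow> ('v \<Rightarrow> 'v \<Rightarrow> bool) \<Rightarrow> nat \<Rightarrow> bool" where
  "min_valency_ge V E k \<longleftrightarrow> (\<forall>v\<in>V. card {w. E v w} \<ge> k)"

definition two_arc :: "('v \<Rightarrow> 'v \<Rightarrow> bool) \<Rightarrow> 'v \<Rightarrow> 'v \<Rightarrow> 'v \<Rightarrow> bool" where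
  "two_arc E a b c \<longleftrightarrow> a \<noteq> b \<and> b \<noteq> c \<and> a \<noteq> c \<and> E a b \<and> E b c"

definition two_arc_transitive :: "('v \<Rightarrow> 'v \<Rightarrow> bool) \<Rightarrow> ('v \<Rightarrow> 'v) set \<Rightarrow> bool" where
  "two_arc_transitive E G \<longleftrightarrow>
     (\<forall>a b c a' b' c'. two_arc E a b c \<longrightarrow> two_arc E a' b' c' \<longrightarrow>
        (\<exists>g\<in>G. g a = a' \<and> g b = b' \<and> g c = c'))"

definition stab :: "('v \<Rightarrow> 'v) set \<Rightarrow> 'v \<Rightarrow> ('v \<Rightarrow> 'v) set" where
  "stab H a = {g \<in> H. g a = a}"

definition perm_orbit :: "('v \<Rightarrow> 'v) set \<Rightarrow> 'v \<Rightarrow> 'v set" where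
  "perm_orbit H a = (\<lambda>g. g a) ` H"

definition transitive_on :: "('v \<Rightarrow> 'v) set \<Rightarrow> 'v set \<Rightarrow> bool" where
  "transitive_on H D \<longleftrightarrow> (\<forall>x\<in>D. \<forall>y\<in>D. \<exists>g\<in>H. g x = y)"

abbreviation subgrp :: "'v set \<Rightarrow> ('v \<Rightarrow> 'v) set \<Rightarrow> ('v \<Rightarrow> 'v) monoid" where
  "subgrp V H \<equiv> (BijGroup V)\<lparr>carrier := H\<rparr>"

definition min_normal :: "'v set \<Rightarrow> ('v \<Rightarrow> 'v) set \<Rightarrow> ('v \<Rightarrow> 'v) set \<Rightarrow> bool" where
  "min_normal V H N \<longleftrightarrow> N \<lhd> subgrp V H \<and> N \<noteq> {\<one>\<^bsub>BijGroup V\<^esub>} \<and>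
     (\<forall>K. K \<lhd> subgrp V H \<longrightarrow> K \<subseteq> N \<longrightarrow> K \<noteq> {\<one>\<^bsub>BijGroup V\<^esub>} \<longrightarrow> K = N)"

definition socle :: "'v set \<Rightarrow> ('v \<Rightarrow> 'v) set \<Rightarrow> ('v \<Rightarrow> 'v) set" where
  "socle V H = generate (BijGroup V) (\<Union>{N. min_normal V H N})"

text \<open>Quasiprimitivity of the group induced by H on an H-invariant set D:
  every normal subgroup of H acting nontrivially on D is transitive on D
  (equivalently every minimal normal subgroup of the induced group is transitive).\<close>
definition quasiprimitive_on :: "'v set \<Rightarrow> ('v \<Rightarrow> 'v) set \<Rightarrow> 'v set \<Rightarrow> bool" where
  "quasiprimitive_on V H D \<longleftrightarrow> D \<noteq> {} \<and>
     (\<forall>N. N \<lhd> subgrp V H \<longrightarrow> (\<exists>g\<in>N. \<exists>x\<in>D. g x \<noteq> x) \<longrightarrow> transitive_on N D)"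

definition list_prod :: "'v set \<Rightarrow> (nat \<Rightarrow> ('v \<Rightarrow> 'v)) \<Rightarrow> nat \<Rightarrow> ('v \<Rightarrow> 'v)" where
  "list_prod V t n = foldr (\<lambda>i acc. t i \<otimes>\<^bsub>BijGroup V\<^esub> acc) [0..<n] \<one>\<^bsub>BijGroup V\<^esub>"

definition internal_dprod :: "'v set \<Rightarrow> ('v \<Rightarrow> 'v) set \<Rightarrow> (nat \<Rightarrow> ('v \<Rightarrow> 'v) set) \<Rightarrow> nat \<Rightarrow> bool" where
  "internal_dprod V M T n \<longleftrightarrow>
     (\<forall>i<n. subgroup (T i) (BijGroup V)) \<and>
     (\<forall>i<n. \<forall>j<n. i \<noteq> j \<longrightarrow> (\<forall>x\<in>T i. \<forall>y\<in>T j.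
         x \<otimes>\<^bsub>BijGroup V\<^esub> y = y \<otimes>\<^bsub>BijGroup V\<^esub> x)) \<and>
     M = {list_prod V t n | t. \<forall>i<n. t i \<in> T i} \<and>
     (\<forall>t s. (\<forall>i<n. t i \<in> T i) \<longrightarrow> (\<forall>i<n. s i \<in> T i) \<longrightarrow>
         list_prod V t n = list_prod V s n \<longrightarrow> (\<forall>i<n. t i = s i))"

definition nonabelian_simple :: "'v set \<Rightarrow> ('v \<Rightarrow> 'v) set \<Rightarrow> bool" where
  "nonabelian_simple V T \<longleftrightarrow> simple_group (subgrp V T) \<and>
     (\<exists>x\<in>T. \<exists>y\<in>T. x \<otimes>\<^bsub>BijGroup V\<^esub> y \<noteq> y \<otimes>\<^bsub>BijGroup V\<^esub> x)"

end

theory Submission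
  imports Defs
begin


lemma BijGroup_mult_apply:
  assumes "x \<in> carrier (BijGroup V)" "y \<in> carrier (BijGroup V)" "a \<in> V"
  shows "(x \<otimes>\<^bsub>BijGroup V\<^esub> y) a = x (y a)"
  using assms by (simp add: BijGroup_def compose_def)

lemma mem_setI: "x = f s \<Longrightarrow> Q s \<Longrightarrow> x \<in> {f s | s. Q s}"
  by blast

lemma BijGroup_one_apply: "a \<in> V \<Longrightarrow> \<one>\<^bsub>BijGroup V\<^esub> a = a"
  by (simp add: BijGroup_def)


lemma sg_carrier: "\<forall>j<n. subgroup (T j) G \<Longrightarrow> j < n \<Longrightarrow> x \<in> T j \<Longrightarrow> x \<in> carrier G"
  by (meson subgroup.mem_carrier)
lemma sg_one: "\<forall>j<n. subgroup (T j) G \<Longrightarrow> j < n \<Longrightarrow> \<one>\<^bsub>G\<^esub> \<in> T j"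
  by (simp add: subgroup.one_closed)
lemma sg_inv: "\<forall>j<n. subgroup (T j) G \<Longrightarrow> j < n \<Longrightarrow> x \<in> T j \<Longrightarrow> inv\<^bsub>G\<^esub> x \<in> T j"
  by (simp add: subgroup.m_inv_closed)
lemma sg_mult: "\<forall>j<n. subgroup (T j) G \<Longrightarrow> j < n \<Longrightarrow> x \<in> T j \<Longrightarrow> y \<in> T j \<Longrightarrow> x \<otimes>\<^bsub>G\<^esub> y \<in> T j"
  by (simp add: subgroup.m_closed)

context group
begin

abbreviation fp :: "(nat \<Rightarrow> 'a) \<Rightarrow> nat \<Rightarrow> 'a" where
  "fp t n \<equiv> foldr (\<lambda>i acc. t i \<otimes> acc) [0..<n] \<one>"

lemma foldr_acc:
  assumes "\<forall>i\<in>set xs. t i \<in> carrier G" "a \<in> carrier G"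
  shows "foldr (\<lambda>i acc. t i \<otimes> acc) xs a = foldr (\<lambda>i acc. t i \<otimes> acc) xs \<one> \<otimes> a
     \<and> foldr (\<lambda>i acc. t i \<otimes> acc) xs \<one> \<in> carrier G"
  using assms by (induction xs) (auto simp: m_assoc)

lemma fp_Suc:
  assumes "\<forall>i\<le>n. t i \<in> carrier G"
  shows "fp t (Suc n) = fp t n \<otimes> t n"
proof -
  have "fp t (Suc n) = foldr (\<lambda>i acc. t i \<otimes> acc) [0..<n] (t n \<otimes> \<one>)" by simp
  also have "\<dots> = fp t n \<otimes> t n" using foldr_acc[of "[0..<n]" t "t n \<otimes> \<one>"] assms by auto
  finally show ?thesis .
qed

lemma fp_closed: "\<forall>i<n. t i \<in> carrier G \<Longrightarrow> fp t n \<in> carrier G"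
  using foldr_acc[of "[0..<n]" t \<one>] by auto

lemma fp_comm:
  assumes T: "\<forall>j<n. subgroup (T j) G"
    and C: "\<forall>j<n. \<forall>k<n. j \<noteq> k \<longrightarrow> (\<forall>x\<in>T j. \<forall>y\<in>T k. x \<otimes> y = y \<otimes> x)"
    and s: "\<forall>j<n. s j \<in> T j" and x: "x \<in> T k" "k < n"
  shows "m \<le> k \<Longrightarrow> x \<otimes> fp s m = fp s m \<otimes> x"
proof (induction m)
  case 0
  have "x \<in> carrier G" using sg_carrier[OF T x(2) x(1)] .
  then show ?case by simp
next
  case (Suc m)
  have sc: "\<forall>i<n. s i \<in> carrier G" using s by (meson sg_carrier[OF T])
  have xc: "x \<in> carrier G" using sg_carrier[OF T x(2) x(1)] .
  have mn: "m < n" "m \<noteq> k" using Suc.prems x(2) by auto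
  have sm: "s m \<in> carrier G" using sc mn by simp
  have sm': "\<forall>i\<le>m. s i \<in> carrier G" using sc mn by simp
  have fc: "fp s m \<in> carrier G" using fp_closed[of m s] sc mn by simp
  have IH: "x \<otimes> fp s m = fp s m \<otimes> x" using Suc.IH Suc.prems by simp
  have cm: "x \<otimes> s m = s m \<otimes> x"
    using C[rule_format, OF x(2) mn(1) not_sym[OF mn(2)] x(1)] s mn(1) by simp
  have "x \<otimes> fp s (Suc m) = x \<otimes> (fp s m \<otimes> s m)" using fp_Suc[OF sm'] by simp
  also have "\<dots> = (x \<otimes> fp s m) \<otimes> s m" using xc fc sm by (simp add: m_assoc)
  also have "\<dots> = fp s m \<otimes> (x \<otimes> s m)" unfolding IH using xc fc sm by (simp add: m_assoc)
  also have "\<dots> = (fp s m \<otimes> s m) \<otimes> x" unfolding cm using xc fc sm by (simp add: m_assoc)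
  also have "\<dots> = fp s (Suc m) \<otimes> x" using fp_Suc[OF sm'] by simp
  finally show ?case .
qed

lemma fp_mult:
  assumes T: "\<forall>j<n. subgroup (T j) G"
    and C: "\<forall>j<n. \<forall>k<n. j \<noteq> k \<longrightarrow> (\<forall>x\<in>T j. \<forall>y\<in>T k. x \<otimes> y = y \<otimes> x)"
    and s: "\<forall>j<n. s j \<in> T j" and s': "\<forall>j<n. s' j \<in> T j"
  shows "m \<le> n \<Longrightarrow> fp s m \<otimes> fp s' m = fp (\<lambda>j. s j \<otimes> s' j) m"
proof (induction m)
  case 0 then show ?case by simp
next
  case (Suc m)
  have sc: "\<forall>i<n. s i \<in> carrier G" using s by (meson sg_carrier[OF T])
  have sc': "\<forall>i<n. s' i \<in> carrier G" using s' by (meson sg_carrier[OF T])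
  have fc: "fp s m \<in> carrier G" "fp s' m \<in> carrier G" using fp_closed sc sc' Suc by auto
  have a: "s m \<in> carrier G" "s' m \<in> carrier G" using sc sc' Suc by auto
  have cm: "s m \<otimes> fp s' m = fp s' m \<otimes> s m"
    using fp_comm[OF T C s', of "s m" m m] s Suc.prems by auto
  have "fp s (Suc m) \<otimes> fp s' (Suc m) = (fp s m \<otimes> s m) \<otimes> (fp s' m \<otimes> s' m)"
    using fp_Suc[of m s] fp_Suc[of m s'] sc sc' Suc by auto
  also have "\<dots> = fp s m \<otimes> (s m \<otimes> fp s' m) \<otimes> s' m" using fc a by (simp add: m_assoc)
  also have "\<dots> = (fp s m \<otimes> fp s' m) \<otimes> (s m \<otimes> s' m)" unfolding cm using fc a by (simp add: m_assoc)
  also have "\<dots> = fp (\<lambda>j. s j \<otimes> s' j) m \<otimes> (s m \<otimes> s' m)" using Suc by simp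
  also have "\<dots> = fp (\<lambda>j. s j \<otimes> s' j) (Suc m)"
    using fp_Suc[of m "\<lambda>j. s j \<otimes> s' j"] sc sc' Suc by auto
  finally show ?case .
qed

lemma fp_single:
  assumes "x \<in> carrier G"
  shows "fp (\<lambda>k. if k = j then x else \<one>) m = (if j < m then x else \<one>)"
proof (induction m)
  case 0 then show ?case by simp
next
  case (Suc m)
  have "fp (\<lambda>k. if k = j then x else \<one>) (Suc m) = fp (\<lambda>k. if k = j then x else \<one>) m \<otimes> (if m = j then x else \<one>)"
    using fp_Suc[of m "\<lambda>k. if k = j then x else \<one>"] assms by auto
  then show ?case using Suc assms by auto
qed

lemma fp_one: "fp (\<lambda>k. \<one>) m = \<one>"
  by (induction m) auto

end

theorem lemma4p1:
  fixes V :: "'v set" and E :: "'v \<Rightarrow> 'v \<Rightarrow> bool" and G :: "('v \<Rightarrow> 'v) set"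
    and a1 a2 :: 'v and M :: "('v \<Rightarrow> 'v) set"
    and T :: "nat \<Rightarrow> ('v \<Rightarrow> 'v) set" and n :: nat
  defines "Gs \<equiv> generate (BijGroup V) (stab G a1 \<union> stab G a2)"
  assumes graph: "finite_simple_graph V E"
    and conn: "connected_graph V E"
    and val: "min_valency_ge V E 3"
    and G_sub: "subgroup G (BijGroup V)" and G_aut: "G \<subseteq> graph_aut V E"
    and two_at: "two_arc_transitive E G"
    and edge: "E a1 a2"
    and M_soc: "M = socle V Gs"
    and qp: "\<forall>\<alpha>\<in>V. quasiprimitive_on V Gs (perm_orbit Gs \<alpha>)"
    and M_unique: "{N. min_normal V Gs N} = {M}"
    and n_ge: "n \<ge> 2"
    and dprod: "internal_dprod V M T n"
    and T_simple: "\<forall>i<n. nonabelian_simple V (T i)"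
    and T_iso: "\<forall>i<n. \<forall>j<n. subgrp V (T i) \<cong> subgrp V (T j)"
    and proj: "\<forall>\<alpha>\<in>V. \<exists>R :: nat \<Rightarrow> ('v \<Rightarrow> 'v) set.
        (\<forall>i<n. subgroup (R i) (BijGroup V) \<and> R i \<subset> T i) \<and>
        (\<forall>t. (\<forall>i<n. t i \<in> T i) \<longrightarrow> list_prod V t n \<in> stab M \<alpha> \<longrightarrow> (\<forall>i<n. t i \<in> R i)) \<and>
        (\<forall>i<n. \<forall>r\<in>R i. \<exists>t. (\<forall>j<n. t j \<in> T j) \<and> list_prod V t n \<in> stab M \<alpha> \<and> t i = r)"
  shows "\<forall>i<n. \<forall>\<alpha>\<in>V.
           \<not> transitive_on (generate (BijGroup V) (\<Union>j\<in>{0..<n} - {i}. T j)) (perm_orbit M \<alpha>)"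
  proof (intro allI impI ballI notI)
  fix i \<alpha>
  assume i: "i < n" and aV: "\<alpha> \<in> V"
  let ?B = "BijGroup V"
  interpret B: group ?B by (rule group_BijGroup)
  assume tr: "transitive_on (generate ?B (\<Union>j\<in>{0..<n} - {i}. T j)) (perm_orbit M \<alpha>)"
  have Tsub: "\<forall>j<n. subgroup (T j) ?B" and C: "\<forall>j<n. \<forall>k<n. j \<noteq> k \<longrightarrow> (\<forall>x\<in>T j. \<forall>y\<in>T k. x \<otimes>\<^bsub>?B\<^esub> y = y \<otimes>\<^bsub>?B\<^esub> x)"
    and Mdef: "M = {list_prod V t n | t. \<forall>i<n. t i \<in> T i}"
    using dprod unfolding internal_dprod_def by auto
  have lp: "list_prod V t n = B.fp t n" for t unfolding list_prod_def by simp
  from bspec[OF proj aV] obtain R where RR: "(\<forall>i<n. subgroup (R i) ?B \<and> R i \<subset> T i) \<and>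
        (\<forall>t. (\<forall>i<n. t i \<in> T i) \<longrightarrow> list_prod V t n \<in> stab M \<alpha> \<longrightarrow> (\<forall>i<n. t i \<in> R i)) \<and>
        (\<forall>i<n. \<forall>r\<in>R i. \<exists>t. (\<forall>j<n. t j \<in> T j) \<and> list_prod V t n \<in> stab M \<alpha> \<and> t i = r)" ..
  have R1: "\<forall>i<n. subgroup (R i) ?B \<and> R i \<subset> T i" using RR by (rule conjunct1)
  have R2: "\<forall>t. (\<forall>i<n. t i \<in> T i) \<longrightarrow> list_prod V t n \<in> stab M \<alpha> \<longrightarrow> (\<forall>i<n. t i \<in> R i)"
    using RR by (rule conjunct1[OF conjunct2])
  obtain x where xT: "x \<in> T i" and xR: "x \<notin> R i" using R1 i by blast
  have xc: "x \<in> carrier ?B" using sg_carrier[OF Tsub i xT] .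
  define e where "e = (\<lambda>k. if k = i then x else \<one>\<^bsub>?B\<^esub>)"
  have eT: "\<forall>j<n. e j \<in> T j" using xT sg_one[OF Tsub] e_def by auto
  have me: "B.fp e n = x" using B.fp_single[OF xc, of i n] i e_def by simp
  have onet: "\<forall>j<n. (\<lambda>k. \<one>\<^bsub>?B\<^esub>) j \<in> T j" using sg_one[OF Tsub] by blast
  have "B.fp (\<lambda>k. \<one>\<^bsub>?B\<^esub>) n \<in> M" unfolding Mdef lp
    by (rule mem_setI[where f="\<lambda>s. B.fp s n" and s="\<lambda>k. \<one>\<^bsub>?B\<^esub>"]) (use onet in auto)
  then have oneM: "\<one>\<^bsub>?B\<^esub> \<in> M" using B.fp_one by simp
  have "B.fp e n \<in> M" unfolding Mdef lp using eT by blast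
  then have xM: "x \<in> M" using me by simp
  have o1: "\<alpha> \<in> perm_orbit M \<alpha>" unfolding perm_orbit_def using oneM BijGroup_one_apply[OF aV]
    by (metis image_eqI)
  have o2: "x \<alpha> \<in> perm_orbit M \<alpha>" unfolding perm_orbit_def using xM by blast
  obtain g where gN: "g \<in> generate ?B (\<Union>j\<in>{0..<n} - {i}. T j)" and gx: "g \<alpha> = x \<alpha>"
    using tr o1 o2 unfolding transitive_on_def by blast
  define P where "P = {B.fp s n | s. (\<forall>j<n. s j \<in> T j) \<and> s i = \<one>\<^bsub>?B\<^esub>}"
  have gP: "g \<in> P" using gN
  proof (induction rule: generate.induct)
    case one
    have "B.fp (\<lambda>k. \<one>\<^bsub>?B\<^esub>) n \<in> P" unfolding P_def
      by (rule mem_setI[where f="\<lambda>s. B.fp s n" and s="\<lambda>k. \<one>\<^bsub>?B\<^esub>"]) (use onet in auto)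
    then show ?case using B.fp_one by simp
  next
    case (incl h)
    then obtain j where j0: "j \<in> {0..<n} - {i}" "h \<in> T j" by blast
    then have j: "j < n" "j \<noteq> i" "h \<in> T j" by auto
    have hc: "h \<in> carrier ?B" using j by (meson sg_carrier[OF Tsub])
    let ?s = "\<lambda>k. if k = j then h else \<one>\<^bsub>?B\<^esub>"
    have "B.fp ?s n = h" using B.fp_single[OF hc, of j n] j by simp
    moreover have "\<forall>k<n. ?s k \<in> T k" using j sg_one[OF Tsub] by auto
    ultimately show ?case unfolding P_def using j by force
  next
    case (inv h)
    then obtain j where j0: "j \<in> {0..<n} - {i}" "h \<in> T j" by blast
    then have j: "j < n" "j \<noteq> i" "h \<in> T j" by auto
    have hi: "inv\<^bsub>?B\<^esub> h \<in> T j" using j by (meson sg_inv[OF Tsub])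
    have hc: "inv\<^bsub>?B\<^esub> h \<in> carrier ?B" using j hi by (meson sg_carrier[OF Tsub])
    let ?s = "\<lambda>k. if k = j then inv\<^bsub>?B\<^esub> h else \<one>\<^bsub>?B\<^esub>"
    have "B.fp ?s n = inv\<^bsub>?B\<^esub> h" using B.fp_single[OF hc, of j n] j by simp
    moreover have "\<forall>k<n. ?s k \<in> T k" using j hi sg_one[OF Tsub] by auto
    ultimately show ?case unfolding P_def using j by force
  next
    case (eng h1 h2)
    then obtain s1 s2 where s1: "h1 = B.fp s1 n" "\<forall>j<n. s1 j \<in> T j" "s1 i = \<one>\<^bsub>?B\<^esub>"
      and s2: "h2 = B.fp s2 n" "\<forall>j<n. s2 j \<in> T j" "s2 i = \<one>\<^bsub>?B\<^esub>" unfolding P_def by blast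
    have e1: "h1 \<otimes>\<^bsub>?B\<^esub> h2 = B.fp (\<lambda>j. s1 j \<otimes>\<^bsub>?B\<^esub> s2 j) n"
      using B.fp_mult[OF Tsub C s1(2) s2(2)] s1 s2 by simp
    have e2: "\<forall>j<n. s1 j \<otimes>\<^bsub>?B\<^esub> s2 j \<in> T j" using s1 s2 sg_mult[OF Tsub] by blast
    have e3: "s1 i \<otimes>\<^bsub>?B\<^esub> s2 i = \<one>\<^bsub>?B\<^esub>" using s1 s2 by simp
    show ?case unfolding P_def
      by (rule mem_setI[where f="\<lambda>s. B.fp s n" and s="\<lambda>j. s1 j \<otimes>\<^bsub>?B\<^esub> s2 j"]) (use e1 e2 e3 in auto)
  qed
  then obtain s where s: "g = B.fp s n" "\<forall>j<n. s j \<in> T j" "s i = \<one>\<^bsub>?B\<^esub>" unfolding P_def by blast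
  define s' where "s' = (\<lambda>j. inv\<^bsub>?B\<^esub> s j)"
  have s'T: "\<forall>j<n. s' j \<in> T j" using s sg_inv[OF Tsub] s'_def by blast
  have sc: "\<forall>j<n. s j \<in> carrier ?B" using s by (meson sg_carrier[OF Tsub])
  have s'c: "\<forall>j<n. s' j \<in> carrier ?B" using s'T by (meson sg_carrier[OF Tsub])
  have gc: "g \<in> carrier ?B" using s sc B.fp_closed by simp
  have "B.fp s' n \<otimes>\<^bsub>?B\<^esub> g = B.fp (\<lambda>j. s' j \<otimes>\<^bsub>?B\<^esub> s j) n"
    using B.fp_mult[OF Tsub C s'T s(2)] s by simp
  also have "\<dots> = B.fp (\<lambda>j. \<one>\<^bsub>?B\<^esub>) n"
  proof -
    have "\<And>m. m \<le> n \<Longrightarrow> B.fp (\<lambda>j. s' j \<otimes>\<^bsub>?B\<^esub> s j) m = B.fp (\<lambda>j. \<one>\<^bsub>?B\<^esub>) m"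
    proof -
      fix m show "m \<le> n \<Longrightarrow> B.fp (\<lambda>j. s' j \<otimes>\<^bsub>?B\<^esub> s j) m = B.fp (\<lambda>j. \<one>\<^bsub>?B\<^esub>) m"
        by (induction m) (auto simp: s'_def sc)
    qed
    then show ?thesis by simp
  qed
  finally have invg: "B.fp s' n \<otimes>\<^bsub>?B\<^esub> g = \<one>\<^bsub>?B\<^esub>" using B.fp_one by simp
  define u where "u = (\<lambda>j. s' j \<otimes>\<^bsub>?B\<^esub> e j)"
  have uT: "\<forall>j<n. u j \<in> T j" using s'T eT sg_mult[OF Tsub] u_def by blast
  have "B.fp s' n \<otimes>\<^bsub>?B\<^esub> B.fp e n = B.fp u n"
    using B.fp_mult[OF Tsub C s'T eT, of n] unfolding u_def by simp
  then have hdef: "B.fp u n = B.fp s' n \<otimes>\<^bsub>?B\<^esub> x" using me by simp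
  have ui: "u i = x" using s i u_def s'_def e_def xc by simp
  have hM: "B.fp u n \<in> M" unfolding Mdef lp using uT by blast
  have s'pc: "B.fp s' n \<in> carrier ?B" using B.fp_closed s'c by simp
  have "B.fp u n \<alpha> = B.fp s' n (x \<alpha>)" using hdef BijGroup_mult_apply[OF s'pc xc aV] by simp
  also have "\<dots> = B.fp s' n (g \<alpha>)" using gx by simp
  also have "\<dots> = (B.fp s' n \<otimes>\<^bsub>?B\<^esub> g) \<alpha>" using BijGroup_mult_apply[OF s'pc gc aV] by simp
  also have "\<dots> = \<alpha>" using invg BijGroup_one_apply[OF aV] by simp
  finally have "B.fp u n \<in> stab M \<alpha>" using hM unfolding stab_def by simp
  then have "u i \<in> R i" using R2 uT i unfolding lp by blast
  then show False using ui xR by simp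
qed

end
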